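(* Let $\Omega\subset\mathbb{R}^N$ be an open bounded domain and $j\in\{1,\dots,N\}$. Let $\pi:\mathbb{R}^N\to\mathbb{R}$ be an affine function, $g=\pi|_{\partial\Omega}$, and $u_0\in C(\overline\Omega)$ with $u_0|_{\partial\Omega}=g$. Let $u$ be the viscosity solution of $u_t-\lambda_j(D^2u)=0$ in $\Omega\times(0,\infty)$, $u=g$ on $\partial\Omega\times(0,\infty)$, $u(\cdot,0)=u_0$, and let $z=\pi$ (which is the viscosity solution of $\lambda_j(D^2z)=0$ in $\Omega$, $z=g$ on $\partial\Omega$). Then there exists $T>0$, depending only on $\Omega$ (not on $u_0$), such that: (1) if $j=1$, then $u(x,t)\le z(x)$ for all $x\in\Omega$, $t>T$; (2) if $j=N$, then $u(x,t)\ge z(x)$ for all $x\in\Omega$, $t>T$; (3) if $1<j<N$, then $u(x,t)=z(x)$ for all $x\in\Omega$, $t>T$.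
   Context: $\lambda_j(A)$ is the $j$-th smallest eigenvalue of a symmetric matrix $A$, $\lambda_j(A)=\inf_{\dim S=j}\sup_{v\in S,|v|=1}\langle Av,v\rangle$. Solutions are viscosity solutions, continuous up to the parabolic boundary, attaining the data pointwise. *)

theory Defs
  imports "HOL-Analysis.Analysis"
begin

text \<open>j-th smallest eigenvalue of a (symmetric) matrix via the Courant--Fischer min-max
  formula: inf over j-dimensional subspaces S of sup over unit vectors v in S of (A v) . v.\<close>
definition eig_j :: "nat \<Rightarrow> real^'n^'n \<Rightarrow> real" where
  "eig_j j A = (INF S \<in> {S :: (real^'n) set. subspace S \<and> dim S = j}.
                  SUP v \<in> {v \<in> S. norm v = 1}. (A *v v) \<bullet> v)"

definition C21_on :: "((real^'n) \<times> real) set \<Rightarrow> (real^'n \<Rightarrow> real \<Rightarrow> real)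
     \<Rightarrow> (real^'n \<Rightarrow> real \<Rightarrow> real^'n) \<Rightarrow> (real^'n \<Rightarrow> real \<Rightarrow> real^'n^'n)
     \<Rightarrow> (real^'n \<Rightarrow> real \<Rightarrow> real) \<Rightarrow> bool" where
  "C21_on U phi phix phixx phit \<longleftrightarrow>
     open U \<and>
     (\<forall>(x,t) \<in> U.
        ((\<lambda>y. phi y t) has_derivative (\<lambda>h. phix x t \<bullet> h)) (at x) \<and>
        ((\<lambda>y. phix y t) has_derivative (\<lambda>h. phixx x t *v h)) (at x) \<and>
        ((\<lambda>s. phi x s) has_real_derivative phit x t) (at t)) \<and>
     continuous_on U (\<lambda>(x,t). phi x t) \<and>
     continuous_on U (\<lambda>(x,t). phix x t) \<and>
     continuous_on U (\<lambda>(x,t). phixx x t) \<and>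
     continuous_on U (\<lambda>(x,t). phit x t)"

definition visc_subsol :: "nat \<Rightarrow> (real^'n) set \<Rightarrow> (real^'n \<Rightarrow> real \<Rightarrow> real) \<Rightarrow> bool" where
  "visc_subsol j \<Omega> u \<longleftrightarrow>
     (\<forall>x0 t0 U phi phix phixx phit.
        x0 \<in> \<Omega> \<and> t0 > 0 \<and> (x0,t0) \<in> U \<and> C21_on U phi phix phixx phit \<and>
        (\<exists>r>0. \<forall>x t. x \<in> \<Omega> \<and> t > 0 \<and> dist (x,t) (x0,t0) < r \<longrightarrow>
                  u x t - phi x t \<le> u x0 t0 - phi x0 t0)
        \<longrightarrow> phit x0 t0 - eig_j j (phixx x0 t0) \<le> 0)"

definition visc_supersol :: "nat \<Rightarrow> (real^'n) set \<Rightarrow> (real^'n \<Rightarrow> real \<Rightarrow> real) \<Rightarrow> bool" where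
  "visc_supersol j \<Omega> u \<longleftrightarrow>
     (\<forall>x0 t0 U phi phix phixx phit.
        x0 \<in> \<Omega> \<and> t0 > 0 \<and> (x0,t0) \<in> U \<and> C21_on U phi phix phixx phit \<and>
        (\<exists>r>0. \<forall>x t. x \<in> \<Omega> \<and> t > 0 \<and> dist (x,t) (x0,t0) < r \<longrightarrow>
                  u x t - phi x t \<ge> u x0 t0 - phi x0 t0)
        \<longrightarrow> phit x0 t0 - eig_j j (phixx x0 t0) \<ge> 0)"

definition visc_sol :: "nat \<Rightarrow> (real^'n) set \<Rightarrow> (real^'n \<Rightarrow> real \<Rightarrow> real) \<Rightarrow> bool" where
  "visc_sol j \<Omega> u \<longleftrightarrow> visc_subsol j \<Omega> u \<and> visc_supersol j \<Omega> u"

definition affine_fun :: "(real^'n \<Rightarrow> real) \<Rightarrow> bool" where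
  "affine_fun p \<longleftrightarrow> (\<exists>a b. \<forall>x. p x = a \<bullet> x + b)"

end

theory Submission
  imports Defs
begin

lemma dimle: "dim (S::(real^'n) set) \<le> CARD('n)"
  using dim_subset_UNIV[where 'a="real^'n"] by simp

lemma unit_in_subspace:
  fixes S :: "(real^'n) set"
  assumes "subspace S" "1 \<le> dim S"
  shows "\<exists>v\<in>S. norm v = 1"
proof -
  have "\<not> S \<subseteq> {0}"
  proof
    assume "S \<subseteq> {0}" then have "dim S = 0" by simp
    with assms(2) show False by simp
  qed
  then obtain x where x: "x \<in> S" "x \<noteq> 0" by auto
  show ?thesis
    by (rule bexI[of _ "x /\<^sub>R norm x"]) (use x assms(1) subspace_scale in auto)
qed

lemma orth_in_subspace:
  fixes S :: "(real^'n) set"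
  assumes "subspace S" "2 \<le> dim S"
  shows "\<exists>u\<in>S. norm u = 1 \<and> v \<bullet> u = 0"
proof (cases "v = 0")
  case True then show ?thesis using unit_in_subspace[OF assms(1)] assms(2) by auto
next
  case False
  let ?H = "{x. v \<bullet> x = 0}"
  have sH: "subspace ?H" by (rule subspace_hyperplane)
  have dH: "dim ?H = CARD('n) - 1" using dim_hyperplane[OF False] by simp
  have "dim {x + y |x y. x \<in> S \<and> y \<in> ?H} + dim(S \<inter> ?H) = dim S + dim ?H"
    by (rule dim_sums_Int[OF assms(1) sH])
  moreover have "dim {x + y |x y. x \<in> S \<and> y \<in> ?H} \<le> CARD('n)" by (rule dimle)
  moreover have "CARD('n) \<ge> 1" by (simp add: Suc_leI)
  ultimately have "1 \<le> dim (S \<inter> ?H)" using assms(2) dH by linarith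
  moreover have "subspace (S \<inter> ?H)" using assms(1) sH by (rule subspace_inter)
  ultimately obtain u where "u \<in> S \<inter> ?H" "norm u = 1" using unit_in_subspace by blast
  then show ?thesis by auto
qed

lemma sub_in_orth:
  fixes v :: "real^'n"
  assumes "j \<le> CARD('n) - 1"
  shows "\<exists>S. subspace S \<and> dim S = j \<and> S \<subseteq> {x. v \<bullet> x = 0}"
proof -
  let ?H = "{x. v \<bullet> x = 0}"
  have "dim ?H \<ge> CARD('n) - 1"
  proof (cases "v = 0")
    case True then show ?thesis by simp
  next
    case False then show ?thesis using dim_hyperplane[OF False] by simp
  qed
  then have "j \<le> dim ?H" using assms by linarith
  then obtain T where "subspace T" "T \<subseteq> span ?H" "dim T = j" by (rule choose_subspace_of_subspace)
  moreover have "span ?H = ?H" by (rule span_eq_iff[THEN iffD2, OF subspace_hyperplane])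
  ultimately show ?thesis by auto
qed

lemma quad_bdd:
  fixes A :: "real^'n^'n"
  shows "\<exists>K. \<forall>v. norm v = 1 \<longrightarrow> \<bar>(A *v v) \<bullet> v\<bar> \<le> K"
proof -
  obtain K where K: "\<And>x. norm (A *v x) \<le> norm x * K"
    using bounded_linear.bounded[OF matrix_vector_mul_bounded_linear[of A]] by blast
  show ?thesis
  proof (intro exI allI impI)
    fix v :: "real^'n" assume "norm v = 1"
    have "\<bar>(A *v v) \<bullet> v\<bar> \<le> norm (A *v v) * norm v" by (rule Cauchy_Schwarz_ineq2)
    also have "\<dots> = norm (A *v v)" using \<open>norm v = 1\<close> by simp
    also have "\<dots> \<le> K" using K[of v] \<open>norm v = 1\<close> by simp
    finally show "\<bar>(A *v v) \<bullet> v\<bar> \<le> K" .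
  qed
qed

lemma eig_upper:
  fixes A :: "real^'n^'n"
  assumes "subspace S0" "dim S0 = j" "1 \<le> j"
    and "\<And>v. v \<in> S0 \<Longrightarrow> norm v = 1 \<Longrightarrow> (A *v v) \<bullet> v = c"
  shows "eig_j j A \<le> c"
proof -
  obtain K where K: "\<And>v. norm v = 1 \<Longrightarrow> \<bar>(A *v v) \<bullet> v\<bar> \<le> K" using quad_bdd by blast
  let ?h = "\<lambda>S. SUP v \<in> {v \<in> S. norm v = 1}. (A *v v) \<bullet> v"
  have bddS: "bdd_above ((\<lambda>v. (A *v v) \<bullet> v) ` {v \<in> S. norm v = 1})" for S
    by (rule bdd_aboveI[of _ K]) (use K in force)
  have low: "?h S \<ge> -K" if sS: "subspace S" and dS: "dim S = j" for S
  proof -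
    obtain v where v: "v \<in> S" "norm v = 1" using unit_in_subspace[of S] sS dS assms(3) by auto
    have "-K \<le> (A *v v) \<bullet> v" using K[OF v(2)] by linarith
    also have "\<dots> \<le> ?h S" by (rule cSUP_upper) (use v bddS in auto)
    finally show ?thesis .
  qed
  have "?h S0 \<le> c"
  proof (rule cSUP_least)
    obtain v where "v \<in> S0" "norm v = 1" using unit_in_subspace[of S0] assms(1,2,3) by auto
    then show "{v \<in> S0. norm v = 1} \<noteq> {}" by blast
  next
    fix x assume "x \<in> {v \<in> S0. norm v = 1}"
    then show "(A *v x) \<bullet> x \<le> c" using assms(4) by simp
  qed
  moreover have "eig_j j A \<le> ?h S0"
  proof -
    have bb: "bdd_below (?h ` {S. subspace S \<and> dim S = j})"
      by (rule bdd_belowI2[of _ "-K"]) (use low in blast)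
    have "S0 \<in> {S. subspace S \<and> dim S = j}" using assms(1,2) by blast
    from cINF_lower[OF bb this] show ?thesis unfolding eig_j_def .
  qed
  ultimately show ?thesis by linarith
qed

lemma eig_lower:
  fixes A :: "real^'n^'n"
  assumes "j \<le> CARD('n)"
    and "\<And>S. subspace S \<Longrightarrow> dim S = j \<Longrightarrow> \<exists>v\<in>S. norm v = 1 \<and> (A *v v) \<bullet> v \<ge> c"
  shows "eig_j j A \<ge> c"
proof -
  obtain K where K: "\<And>v. norm v = 1 \<Longrightarrow> \<bar>(A *v v) \<bullet> v\<bar> \<le> K" using quad_bdd by blast
  have bddS: "bdd_above ((\<lambda>v. (A *v v) \<bullet> v) ` {v \<in> S. norm v = 1})" for S
    by (rule bdd_aboveI[of _ K]) (use K in force)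
  have "j \<le> dim (UNIV :: (real^'n) set)" using assms(1) by simp
  then obtain T :: "(real^'n) set" where T: "subspace T" "dim T = j"
    using choose_subspace_of_subspace by metis
  show ?thesis
    unfolding eig_j_def
  proof (rule cINF_greatest)
    show "{S :: (real^'n) set. subspace S \<and> dim S = j} \<noteq> {}" using T by auto
  next
    fix S :: "(real^'n) set" assume "S \<in> {S. subspace S \<and> dim S = j}"
    then obtain v where v: "v \<in> S" "norm v = 1" "(A *v v) \<bullet> v \<ge> c" using assms(2) by auto
    have "(A *v v) \<bullet> v \<le> (SUP v \<in> {v \<in> S. norm v = 1}. (A *v v) \<bullet> v)"
      by (rule cSUP_upper) (use v bddS in auto)
    then show "c \<le> (SUP v \<in> {v \<in> S. norm v = 1}. (A *v v) \<bullet> v)" using v by linarith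
  qed
qed


definition hessm :: "real \<Rightarrow> real \<Rightarrow> real^'n \<Rightarrow> real^'n^'n" where
  "hessm \<alpha> \<beta> v = (\<chi> i k. \<alpha> * (if i = k then 1 else 0) + \<beta> * (v$i * v$k))"

lemma hessm_comp: "(hessm \<alpha> \<beta> v *v h)$i = \<alpha> * h$i + \<beta> * (v \<bullet> h) * v$i"
proof -
  have "(hessm \<alpha> \<beta> v *v h)$i = (\<Sum>j\<in>UNIV. (\<alpha> * (if i = j then 1 else 0) + \<beta> * (v$i * v$j)) * h$j)"
    by (simp add: hessm_def matrix_vector_mult_def)
  also have "\<dots> = (\<Sum>j\<in>UNIV. (if i = j then \<alpha> * h$j else 0)) + (\<Sum>j\<in>UNIV. \<beta> * v$i * (v$j * h$j))"
    by (subst sum.distrib[symmetric]) (auto intro!: sum.cong simp: algebra_simps)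
  also have "\<dots> = \<alpha> * h$i + \<beta> * (v \<bullet> h) * v$i"
    by (simp add: inner_vec_def sum_distrib_left mult_ac)
  finally show ?thesis .
qed

lemma hessm_mult: "hessm \<alpha> \<beta> v *v h = \<alpha> *\<^sub>R h + (\<beta> * (v \<bullet> h)) *\<^sub>R v"
  by (simp add: vec_eq_iff hessm_comp)

lemma hessm_quad: "(hessm \<alpha> \<beta> v *v h) \<bullet> h = \<alpha> * (h \<bullet> h) + \<beta> * (v \<bullet> h)^2"
  by (simp add: hessm_mult inner_commute power2_eq_square algebra_simps)

lemma hessm_cont[continuous_intros]:
  assumes "continuous_on S a" "continuous_on S b" "continuous_on S v"
  shows "continuous_on S (\<lambda>z. hessm (a z) (b z) (v z))"
  unfolding hessm_def
  by (intro continuous_on_vec_lambda continuous_on_add continuous_on_mult continuous_on_const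
      continuous_on_component assms)

definition pp :: "nat \<Rightarrow> real \<Rightarrow> real" where "pp n y = (max 0 y)^n"

lemma pp_deriv:
  assumes "n \<ge> 2"
  shows "(pp n has_real_derivative (real n * pp (n-1) y)) (at y)"
proof -
  consider "y > 0" | "y < 0" | "y = 0" by linarith
  then show ?thesis
  proof cases
    case 1
    have "((\<lambda>y. y^n) has_real_derivative (real n * pp (n-1) y)) (at y)"
      using DERIV_pow[of n y] 1 by (simp add: pp_def)
    then show ?thesis
      by (rule has_field_derivative_transform_within_open[where S="{0<..}"])
         (use 1 in \<open>auto simp: pp_def\<close>)
  next
    case 2
    have "((\<lambda>y. 0) has_real_derivative (real n * pp (n-1) y)) (at y)" using 2 assms by (simp add: pp_def power_0_left)
    then show ?thesis
      by (rule has_field_derivative_transform_within_open[where S="{..<0}"])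
         (use 2 assms in \<open>auto simp: pp_def\<close>)
  next
    case 3
    have "((\<lambda>z. (pp n z - pp n 0) / (z - 0)) \<longlongrightarrow> 0) (at 0)"
    proof (rule Lim_null_comparison)
      show "\<forall>\<^sub>F z in at 0. norm ((pp n z - pp n 0) / (z - 0)) \<le> \<bar>z\<bar>^(n-1)"
      proof (rule always_eventually, intro allI)
        fix z :: real
        show "norm ((pp n z - pp n 0) / (z - 0)) \<le> \<bar>z\<bar>^(n-1)"
        proof (cases "z > 0")
          case True
          have "z^n / z = z^(n-1)" using True assms
            by (metis One_nat_def Suc_diff_le Suc_leD diff_Suc_1 nonzero_mult_div_cancel_left
                numerals(2) power_Suc less_irrefl)
          then show ?thesis using True assms by (simp add: pp_def power_0_left)
        next
          case False
          then show ?thesis using assms by (simp add: pp_def max_def)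
        qed
      qed
      have lim: "((\<lambda>z::real. \<bar>z\<bar>^(n-1)) \<longlongrightarrow> \<bar>0\<bar>^(n-1)) (at 0)"
        by (intro tendsto_intros)
      have z0: "\<bar>0::real\<bar>^(n-1) = 0" using assms by (simp add: power_0_left)
      show "((\<lambda>z::real. \<bar>z\<bar>^(n-1)) \<longlongrightarrow> 0) (at 0)" using lim unfolding z0 .
    qed
    then have "(pp n has_real_derivative 0) (at 0)"
      using has_field_derivative_iff by blast
    then show ?thesis using 3 assms by (simp add: pp_def power_0_left)
  qed
qed

lemma pp_cont[continuous_intros]: "continuous_on S f \<Longrightarrow> continuous_on S (\<lambda>x. pp n (f x))"
  unfolding pp_def by (intro continuous_intros)

lemma pp_chain:
  assumes "n \<ge> 2" "(f has_derivative f') (at x within S)"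
  shows "((\<lambda>x. pp n (f x)) has_derivative (\<lambda>h. real n * pp (n-1) (f x) * f' h)) (at x within S)"
proof -
  have "(pp n has_derivative (*) (real n * pp (n-1) (f x))) (at (f x))"
    using pp_deriv[OF assms(1), of "f x"] by (simp add: has_field_derivative_def)
  from has_derivative_compose[OF assms(2) this] show ?thesis .
qed

lemma pp_real_chain:
  assumes "n \<ge> 2" "(f has_real_derivative f') (at x)"
  shows "((\<lambda>x. pp n (f x)) has_real_derivative (real n * pp (n-1) (f x) * f')) (at x)"
  using DERIV_chain2[OF pp_deriv[OF assms(1)] assms(2)] .

lemma pp_nonneg: "pp n y \<ge> 0" by (simp add: pp_def)


definition sig :: "real \<Rightarrow> real^'n \<Rightarrow> real^'n \<Rightarrow> real \<Rightarrow> real" where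
  "sig R1 xc x t = R1 - (x - xc) \<bullet> (x - xc) - 2 * t"

definition bw :: "real^'n \<Rightarrow> real \<Rightarrow> real^'n \<Rightarrow> real \<Rightarrow> real \<Rightarrow> real \<Rightarrow> real^'n \<Rightarrow> real \<Rightarrow> real" where
  "bw a b xc M R1 s x t = a \<bullet> x + b + s * M * pp 3 (sig R1 xc x t)"

definition bwx :: "real^'n \<Rightarrow> real^'n \<Rightarrow> real \<Rightarrow> real \<Rightarrow> real \<Rightarrow> real^'n \<Rightarrow> real \<Rightarrow> real^'n" where
  "bwx a xc M R1 s x t = a - (6 * s * M * pp 2 (sig R1 xc x t)) *\<^sub>R (x - xc)"

definition bwxx :: "real^'n \<Rightarrow> real \<Rightarrow> real \<Rightarrow> real \<Rightarrow> real^'n \<Rightarrow> real \<Rightarrow> real^'n^'n" where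
  "bwxx xc M R1 s x t = hessm (- 6 * s * M * pp 2 (sig R1 xc x t)) (24 * s * M * pp 1 (sig R1 xc x t)) (x - xc)"

definition bwt :: "real^'n \<Rightarrow> real \<Rightarrow> real \<Rightarrow> real \<Rightarrow> real^'n \<Rightarrow> real \<Rightarrow> real" where
  "bwt xc M R1 s x t = - 6 * s * M * pp 2 (sig R1 xc x t)"

lemma sig_deriv: "((\<lambda>y. sig R1 xc y t) has_derivative (\<lambda>h. -2 * ((x - xc) \<bullet> h))) (at x)"
proof -
  have "((\<lambda>y. (y - xc) \<bullet> (y - xc)) has_derivative (\<lambda>h. (x - xc) \<bullet> h + h \<bullet> (x - xc))) (at x)"
    using has_derivative_inner[OF has_derivative_diff[OF has_derivative_ident has_derivative_const]
                                  has_derivative_diff[OF has_derivative_ident has_derivative_const]]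
    by simp
  then have "((\<lambda>y. R1 - (y - xc) \<bullet> (y - xc) - 2 * t) has_derivative (\<lambda>h. 0 - ((x - xc) \<bullet> h + h \<bullet> (x - xc)) - 0)) (at x)"
    by (intro has_derivative_diff has_derivative_const)
  then show ?thesis unfolding sig_def
    by (rule has_derivative_eq_rhs) (simp add: fun_eq_iff inner_commute)
qed

lemma sig_tderiv: "((\<lambda>\<tau>. sig R1 xc x \<tau>) has_real_derivative (-2)) (at t)"
  unfolding sig_def by (auto intro!: derivative_eq_intros)

lemma bw_dx: "((\<lambda>y. bw a b xc M R1 s y t) has_derivative (\<lambda>h. bwx a xc M R1 s x t \<bullet> h)) (at x)"
proof -
  have d1: "((\<lambda>y. pp 3 (sig R1 xc y t)) has_derivative
      (\<lambda>h. real 3 * pp (3-1) (sig R1 xc x t) * (-2 * ((x - xc) \<bullet> h)))) (at x)"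
    by (rule pp_chain[OF _ sig_deriv]) simp
  have "((\<lambda>y. a \<bullet> y + b + s * M * pp 3 (sig R1 xc y t)) has_derivative
      (\<lambda>h. a \<bullet> h + 0 + s * M * (real 3 * pp (3-1) (sig R1 xc x t) * (-2 * ((x - xc) \<bullet> h))))) (at x)"
    by (intro has_derivative_add has_derivative_const has_derivative_mult_right d1
        bounded_linear.has_derivative[OF bounded_linear_inner_right has_derivative_ident])
  then show ?thesis unfolding bw_def
    by (rule has_derivative_eq_rhs) (simp add: fun_eq_iff bwx_def inner_diff_left algebra_simps)
qed

lemma bwx_dx: "((\<lambda>y. bwx a xc M R1 s y t) has_derivative (\<lambda>h. bwxx xc M R1 s x t *v h)) (at x)"
proof -
  have d1: "((\<lambda>y. pp 2 (sig R1 xc y t)) has_derivative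
      (\<lambda>h. real 2 * pp (2-1) (sig R1 xc x t) * (-2 * ((x - xc) \<bullet> h)))) (at x)"
    by (rule pp_chain[OF _ sig_deriv]) simp
  have d2: "((\<lambda>y. 6 * s * M * pp 2 (sig R1 xc y t)) has_derivative
      (\<lambda>h. 6 * s * M * (real 2 * pp (2-1) (sig R1 xc x t) * (-2 * ((x - xc) \<bullet> h))))) (at x)"
    by (intro has_derivative_mult_right d1)
  have "((\<lambda>y. a - (6 * s * M * pp 2 (sig R1 xc y t)) *\<^sub>R (y - xc)) has_derivative
     (\<lambda>h. 0 - ((6 * s * M * pp 2 (sig R1 xc x t)) *\<^sub>R (h - 0) +
        (6 * s * M * (real 2 * pp (2-1) (sig R1 xc x t) * (-2 * ((x - xc) \<bullet> h)))) *\<^sub>R (x - xc)))) (at x)"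
    by (intro has_derivative_diff has_derivative_const has_derivative_scaleR d2 has_derivative_ident)
  then show ?thesis unfolding bwx_def
    by (rule has_derivative_eq_rhs) (simp add: fun_eq_iff bwxx_def hessm_mult algebra_simps)
qed

lemma bw_dt: "((\<lambda>\<tau>. bw a b xc M R1 s x \<tau>) has_real_derivative bwt xc M R1 s x t) (at t)"
proof -
  have "((\<lambda>\<tau>. pp 3 (sig R1 xc x \<tau>)) has_real_derivative (real 3 * pp (3-1) (sig R1 xc x t) * (-2))) (at t)"
    by (rule pp_real_chain[OF _ sig_tderiv]) simp
  then have "((\<lambda>\<tau>. a \<bullet> x + b + s * M * pp 3 (sig R1 xc x \<tau>)) has_real_derivative
      (0 + s * M * (real 3 * pp (3-1) (sig R1 xc x t) * (-2)))) (at t)"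
    by (intro DERIV_add DERIV_const DERIV_cmult)
  then show ?thesis unfolding bw_def bwt_def by (rule DERIV_cong) (simp add: algebra_simps)
qed

lemma bw_C21: "C21_on UNIV (bw a b xc M R1 s) (bwx a xc M R1 s) (bwxx xc M R1 s) (bwt xc M R1 s)"
  unfolding C21_on_def
  apply (intro conjI)
  subgoal by simp
  subgoal using bw_dx bwx_dx bw_dt by auto
  subgoal unfolding case_prod_unfold bw_def sig_def
    by (intro continuous_on_add continuous_on_mult continuous_on_const pp_cont continuous_on_diff
        continuous_on_inner continuous_on_fst continuous_on_snd continuous_on_id)
  subgoal unfolding case_prod_unfold bwx_def sig_def
    by (intro continuous_on_add continuous_on_mult continuous_on_const pp_cont continuous_on_diff
        continuous_on_inner continuous_on_fst continuous_on_snd continuous_on_id continuous_on_scaleR)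
  subgoal unfolding case_prod_unfold bwxx_def sig_def
    by (intro hessm_cont continuous_on_add continuous_on_mult continuous_on_const pp_cont continuous_on_diff
        continuous_on_inner continuous_on_fst continuous_on_snd continuous_on_id continuous_on_minus)
  subgoal unfolding case_prod_unfold bwt_def sig_def
    by (intro continuous_on_add continuous_on_mult continuous_on_const pp_cont continuous_on_diff
        continuous_on_inner continuous_on_fst continuous_on_snd continuous_on_id continuous_on_minus)
  done

lemma bwxx_orth: "(x - xc) \<bullet> v = 0 \<Longrightarrow> norm v = 1 \<Longrightarrow> (bwxx xc M R1 s x t *v v) \<bullet> v = bwt xc M R1 s x t"
  unfolding bwxx_def bwt_def hessm_quad by (simp add: dot_square_norm)

lemma bw_upper:
  assumes "1 \<le> j" "j \<le> CARD('n) - 1"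
  shows "eig_j j (bwxx xc M R1 s x t) \<le> bwt xc M R1 s (x :: real^'n) t"
proof -
  obtain S where S: "subspace S" "dim S = j" "S \<subseteq> {v. (x - xc) \<bullet> v = 0}"
    using sub_in_orth[OF assms(2), of "x - xc"] by blast
  show ?thesis
    by (rule eig_upper[OF S(1,2) assms(1)]) (use S(3) bwxx_orth in blast)
qed

lemma bw_lower:
  assumes "2 \<le> j" "j \<le> CARD('n)"
  shows "eig_j j (bwxx xc M R1 s x t) \<ge> bwt xc M R1 s (x :: real^'n) t"
proof (rule eig_lower[OF assms(2)])
  fix S :: "(real^'n) set" assume "subspace S" "dim S = j"
  then obtain u where "u \<in> S" "norm u = 1" "(x - xc) \<bullet> u = 0"
    using orth_in_subspace[of S "x - xc"] assms(1) by auto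
  then show "\<exists>v\<in>S. norm v = 1 \<and> bwt xc M R1 s x t \<le> (bwxx xc M R1 s x t *v v) \<bullet> v"
  proof -
    assume u: "u \<in> S" "norm u = 1" "(x - xc) \<bullet> u = 0"
    have "(bwxx xc M R1 s x t *v u) \<bullet> u = bwt xc M R1 s x t" by (rule bwxx_orth[OF u(3,2)])
    with u show ?thesis by force
  qed
qed


lemma C21_parts:
  assumes "C21_on UNIV w wx wxx wt"
  shows "\<And>x t. ((\<lambda>y. w y t) has_derivative (\<lambda>h. wx x t \<bullet> h)) (at x)"
    and "\<And>x t. ((\<lambda>y. wx y t) has_derivative (\<lambda>h. wxx x t *v h)) (at x)"
    and "\<And>x t. ((\<lambda>s. w x s) has_real_derivative wt x t) (at t)"
    and "continuous_on UNIV (\<lambda>z. w (fst z) (snd z))"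
    and "continuous_on UNIV (\<lambda>z. wx (fst z) (snd z))"
    and "continuous_on UNIV (\<lambda>z. wxx (fst z) (snd z))"
    and "continuous_on UNIV (\<lambda>z. wt (fst z) (snd z))"
  using assms unfolding C21_on_def case_prod_unfold by auto

lemma penal_C21:
  fixes w :: "real^'n \<Rightarrow> real \<Rightarrow> real"
  assumes C: "C21_on UNIV w wx wxx wt"
  shows "C21_on (UNIV \<times> {..<T'}) (\<lambda>x t. w x t + \<eta> / (T' - t)) wx wxx (\<lambda>x t. wt x t + \<eta> / (T' - t)^2)"
proof -
  note P = C21_parts[OF C]
  have D1: "((\<lambda>y. w y t + \<eta> / (T' - t)) has_derivative (\<lambda>h. wx x t \<bullet> h)) (at x)" for x t
    by (rule has_derivative_add_const[OF P(1)])
  have D3: "((\<lambda>s. w x s + \<eta> / (T' - s)) has_real_derivative (wt x t + \<eta> / (T' - t)^2)) (at t)"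
    if "t < T'" for x t
  proof -
    have "((\<lambda>s. \<eta> / (T' - s)) has_real_derivative \<eta> / (T' - t)^2) (at t)"
      using that by (auto intro!: derivative_eq_intros simp: power2_eq_square)
    then show ?thesis by (intro DERIV_add P(3))
  qed
  have cd: "continuous_on (UNIV \<times> {..<T'}) (\<lambda>z. \<eta> / (T' - snd z))"
    by (intro continuous_intros) auto
  have cd2: "continuous_on (UNIV \<times> {..<T'}) (\<lambda>z. \<eta> / (T' - snd z)^2)"
    by (intro continuous_intros) auto
  show ?thesis
    unfolding C21_on_def
    apply (intro conjI)
    subgoal by (intro open_Times) auto
    subgoal using D1 D3 P(2) by auto
    subgoal unfolding case_prod_unfold
      by (intro continuous_on_add cd continuous_on_subset[OF P(4)]) auto
    subgoal unfolding case_prod_unfold by (rule continuous_on_subset[OF P(5)]) auto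
    subgoal unfolding case_prod_unfold by (rule continuous_on_subset[OF P(6)]) auto
    subgoal unfolding case_prod_unfold
      by (intro continuous_on_add cd2 continuous_on_subset[OF P(7)]) auto
    done
qed


lemma max_point:
  fixes f g :: "real^'n \<Rightarrow> real \<Rightarrow> real"
  assumes opn: "open \<Omega>" and bnd: "bounded \<Omega>"
    and cf: "continuous_on (closure \<Omega> \<times> {0..}) (\<lambda>(x,t). f x t)"
    and cg: "continuous_on (closure \<Omega> \<times> {0..}) (\<lambda>(x,t). g x t)"
    and bd: "\<And>x t. x \<in> frontier \<Omega> \<Longrightarrow> t > 0 \<Longrightarrow> f x t \<le> g x t"
    and init: "\<And>x. x \<in> closure \<Omega> \<Longrightarrow> f x 0 \<le> g x 0"
    and x1: "x1 \<in> closure \<Omega>" and t1: "t1 \<ge> 0" and gt: "f x1 t1 > g x1 t1"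
  shows "\<exists>x0 t0 \<eta> T'. x0 \<in> \<Omega> \<and> 0 < t0 \<and> t0 < T' \<and> \<eta> > 0 \<and>
           (\<forall>x t. x \<in> \<Omega> \<and> 0 < t \<and> t < T' \<longrightarrow>
              f x t - g x t - \<eta> / (T' - t) \<le> f x0 t0 - g x0 t0 - \<eta> / (T' - t0))"
proof -
  define d where "d = f x1 t1 - g x1 t1"
  have dpos: "d > 0" using gt d_def by simp
  define T' where "T' = t1 + 1"
  define F where "F = (\<lambda>z. f (fst z) (snd z) - g (fst z) (snd z))"
  have contF: "continuous_on (closure \<Omega> \<times> {0..}) F"
    unfolding F_def using continuous_on_diff[OF cf cg] by (simp add: case_prod_unfold)
  have cK0: "compact (closure \<Omega> \<times> {0..T'})"
    using bnd by (intro compact_Times) (auto simp: compact_closure)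
  have ne0: "closure \<Omega> \<times> {0..T'} \<noteq> {}" using x1 t1 T'_def by auto
  have contF0: "continuous_on (closure \<Omega> \<times> {0..T'}) F"
    by (rule continuous_on_subset[OF contF]) auto
  obtain zB where zB: "zB \<in> closure \<Omega> \<times> {0..T'}" "\<And>z. z \<in> closure \<Omega> \<times> {0..T'} \<Longrightarrow> F z \<le> F zB"
    using continuous_attains_sup[OF cK0 ne0 contF0] by blast
  define B where "B = F zB"
  have in1: "(x1, t1) \<in> closure \<Omega> \<times> {0..T'}" using x1 t1 T'_def by auto
  have dB: "d \<le> B" using zB(2)[OF in1] unfolding B_def F_def d_def by simp
  define \<eta> where "\<eta> = d / 2"
  define \<delta> where "\<delta> = \<eta> / (B + 1)"
  have etapos: "\<eta> > 0" using dpos \<eta>_def by simp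
  have Bpos: "B + 1 > 0" using dB dpos by simp
  have dpos': "\<delta> > 0" unfolding \<delta>_def using etapos Bpos by simp
  have dlt: "\<delta> < 1"
  proof -
    have "\<eta> < B + 1" using dB dpos \<eta>_def by simp
    then show ?thesis unfolding \<delta>_def using Bpos by simp
  qed
  define \<psi> where "\<psi> = (\<lambda>z. F z - \<eta> / (T' - snd z))"
  let ?K = "closure \<Omega> \<times> {0..T' - \<delta>}"
  have cK: "compact ?K" using bnd by (intro compact_Times) (auto simp: compact_closure)
  have in1': "(x1, t1) \<in> ?K" using x1 t1 T'_def dlt by auto
  have contpsi: "continuous_on ?K \<psi>"
    unfolding \<psi>_def
  proof (intro continuous_on_diff continuous_on_divide continuous_on_const continuous_on_snd
      continuous_on_id continuous_on_subset[OF contF])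
    show "?K \<subseteq> closure \<Omega> \<times> {0..}" by auto
    show "\<forall>z\<in>?K. T' - snd z \<noteq> 0" using dpos' by auto
  qed
  obtain z0 where z0: "z0 \<in> ?K" "\<And>z. z \<in> ?K \<Longrightarrow> \<psi> z \<le> \<psi> z0"
    using continuous_attains_sup[OF cK _ contpsi] in1' by blast
  obtain x0 t0 where z0e: "z0 = (x0, t0)" by (cases z0)
  have x0c: "x0 \<in> closure \<Omega>" and t0r: "0 \<le> t0" "t0 \<le> T' - \<delta>" using z0(1) z0e by auto
  have psi1: "\<psi> (x1, t1) = d / 2" unfolding \<psi>_def F_def d_def \<eta>_def T'_def by (simp add: field_simps)
  have psi0: "\<psi> z0 \<ge> d / 2" using z0(2)[OF in1'] psi1 by simp
  have glob: "\<psi> (x, t) \<le> \<psi> z0" if "x \<in> closure \<Omega>" "0 \<le> t" "t < T'" for x t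
  proof (cases "t \<le> T' - \<delta>")
    case True then show ?thesis using z0(2) that by auto
  next
    case False
    have "F (x, t) \<le> B" unfolding B_def by (rule zB(2)) (use that in auto)
    moreover have "\<eta> / (T' - t) \<ge> \<eta> / \<delta>"
      using False that etapos dpos' by (intro divide_left_mono) auto
    moreover have "\<eta> / \<delta> = B + 1" unfolding \<delta>_def using etapos Bpos by simp
    ultimately have "\<psi> (x, t) \<le> -1" unfolding \<psi>_def by simp
    then show ?thesis using psi0 dpos by simp
  qed
  have t0pos: "t0 > 0"
  proof (rule ccontr)
    assume "\<not> t0 > 0"
    then have "t0 = 0" using t0r by simp
    then have "\<psi> z0 = f x0 0 - g x0 0 - \<eta> / T'" unfolding \<psi>_def F_def z0e by simp
    moreover have "\<eta> / T' > 0" using etapos T'_def t1 by simp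
    ultimately have "\<psi> z0 < 0" using init[OF x0c] by simp
    then show False using psi0 dpos by simp
  qed
  have x0O: "x0 \<in> \<Omega>"
  proof (rule ccontr)
    assume "x0 \<notin> \<Omega>"
    then have "x0 \<in> frontier \<Omega>" using x0c closure_Un_frontier by blast
    then have "f x0 t0 \<le> g x0 t0" using bd t0pos by simp
    moreover have "\<eta> / (T' - t0) > 0" using etapos t0r dpos' by simp
    ultimately have "\<psi> z0 < 0" unfolding \<psi>_def F_def z0e by simp
    then show False using psi0 dpos by simp
  qed
  show ?thesis
  proof (intro exI conjI allI impI)
    show "x0 \<in> \<Omega>" "0 < t0" "t0 < T'" "0 < \<eta>" using x0O t0pos t0r dpos' etapos by auto
    fix x t assume H: "x \<in> \<Omega> \<and> 0 < t \<and> t < T'"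
    have "\<psi> (x, t) \<le> \<psi> z0" using H closure_subset by (intro glob) auto
    then show "f x t - g x t - \<eta> / (T' - t) \<le> f x0 t0 - g x0 t0 - \<eta> / (T' - t0)"
      unfolding \<psi>_def F_def z0e by simp
  qed
qed


lemma comp_upper:
  fixes u w :: "real^'n \<Rightarrow> real \<Rightarrow> real"
  assumes opn: "open \<Omega>" and bnd: "bounded \<Omega>"
    and cont: "continuous_on (closure \<Omega> \<times> {0..}) (\<lambda>(x,t). u x t)"
    and sub: "visc_subsol j \<Omega> u"
    and C: "C21_on UNIV w wx wxx wt"
    and sup: "\<And>x t. eig_j j (wxx x t) \<le> wt x t"
    and bd: "\<And>x t. x \<in> frontier \<Omega> \<Longrightarrow> t > 0 \<Longrightarrow> u x t \<le> w x t"
    and init: "\<And>x. x \<in> closure \<Omega> \<Longrightarrow> u x 0 \<le> w x 0"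
    and x1: "x1 \<in> closure \<Omega>" and t1: "t1 \<ge> 0"
  shows "u x1 t1 \<le> w x1 t1"
proof (rule ccontr)
  assume "\<not> ?thesis"
  then have gt: "u x1 t1 > w x1 t1" by simp
  have cw: "continuous_on (closure \<Omega> \<times> {0..}) (\<lambda>(x,t). w x t)"
    unfolding case_prod_unfold by (rule continuous_on_subset[OF C21_parts(4)[OF C]]) auto
  obtain x0 t0 \<eta> T' where M: "x0 \<in> \<Omega>" "0 < t0" "t0 < T'" "\<eta> > 0"
    "\<And>x t. x \<in> \<Omega> \<and> 0 < t \<and> t < T' \<Longrightarrow>
        u x t - w x t - \<eta> / (T' - t) \<le> u x0 t0 - w x0 t0 - \<eta> / (T' - t0)"
    using max_point[OF opn bnd cont cw bd init x1 t1 gt] by blast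
  define U where "U = (UNIV :: (real^'n) set) \<times> {..<T'}"
  define phi where "phi = (\<lambda>x t. w x t + \<eta> / (T' - t))"
  define pht where "pht = (\<lambda>x t. wt x t + \<eta> / (T' - t)^2)"
  have pC: "C21_on U phi wx wxx pht" unfolding U_def phi_def pht_def by (rule penal_C21[OF C])
  have Uin: "(x0, t0) \<in> U" using M(3) U_def by simp
  have loc: "\<exists>r>0. \<forall>x t. x \<in> \<Omega> \<and> t > 0 \<and> dist (x,t) (x0,t0) < r \<longrightarrow>
                  u x t - phi x t \<le> u x0 t0 - phi x0 t0"
  proof (intro exI conjI allI impI)
    show "T' - t0 > 0" using M(3) by simp
    fix x t assume H: "x \<in> \<Omega> \<and> t > 0 \<and> dist (x,t) (x0,t0) < T' - t0"
    have "dist t t0 \<le> dist (x,t) (x0,t0)" using dist_snd_le[of "(x,t)" "(x0,t0)"] by simp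
    then have "\<bar>t - t0\<bar> < T' - t0" using H by (simp add: dist_real_def)
    then have "t < T'" by linarith
    then show "u x t - phi x t \<le> u x0 t0 - phi x0 t0"
      using M(5)[of x t] H unfolding phi_def by simp
  qed
  have "pht x0 t0 - eig_j j (wxx x0 t0) \<le> 0"
    using sub unfolding visc_subsol_def
    apply -
    apply (drule spec[of _ x0], drule spec[of _ t0], drule spec[of _ U], drule spec[of _ phi],
        drule spec[of _ wx], drule spec[of _ wxx], drule spec[of _ pht])
    using M(1,2) Uin pC loc by blast
  moreover have "\<eta> / (T' - t0)^2 > 0" using M(3,4) by simp
  ultimately show False using sup[of x0 t0] unfolding pht_def by simp
qed

lemma comp_lower:
  fixes u w :: "real^'n \<Rightarrow> real \<Rightarrow> real"
  assumes opn: "open \<Omega>" and bnd: "bounded \<Omega>"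
    and cont: "continuous_on (closure \<Omega> \<times> {0..}) (\<lambda>(x,t). u x t)"
    and super: "visc_supersol j \<Omega> u"
    and C: "C21_on UNIV w wx wxx wt"
    and subb: "\<And>x t. eig_j j (wxx x t) \<ge> wt x t"
    and bd: "\<And>x t. x \<in> frontier \<Omega> \<Longrightarrow> t > 0 \<Longrightarrow> w x t \<le> u x t"
    and init: "\<And>x. x \<in> closure \<Omega> \<Longrightarrow> w x 0 \<le> u x 0"
    and x1: "x1 \<in> closure \<Omega>" and t1: "t1 \<ge> 0"
  shows "w x1 t1 \<le> u x1 t1"
proof (rule ccontr)
  assume "\<not> ?thesis"
  then have gt: "w x1 t1 > u x1 t1" by simp
  have cw: "continuous_on (closure \<Omega> \<times> {0..}) (\<lambda>(x,t). w x t)"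
    unfolding case_prod_unfold by (rule continuous_on_subset[OF C21_parts(4)[OF C]]) auto
  obtain x0 t0 \<eta> T' where M: "x0 \<in> \<Omega>" "0 < t0" "t0 < T'" "\<eta> > 0"
    "\<And>x t. x \<in> \<Omega> \<and> 0 < t \<and> t < T' \<Longrightarrow>
        w x t - u x t - \<eta> / (T' - t) \<le> w x0 t0 - u x0 t0 - \<eta> / (T' - t0)"
    using max_point[OF opn bnd cw cont bd init x1 t1 gt] by blast
  define U where "U = (UNIV :: (real^'n) set) \<times> {..<T'}"
  define phi where "phi = (\<lambda>x t. w x t + (- \<eta>) / (T' - t))"
  define pht where "pht = (\<lambda>x t. wt x t + (- \<eta>) / (T' - t)^2)"
  have pC: "C21_on U phi wx wxx pht" unfolding U_def phi_def pht_def by (rule penal_C21[OF C])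
  have Uin: "(x0, t0) \<in> U" using M(3) U_def by simp
  have loc: "\<exists>r>0. \<forall>x t. x \<in> \<Omega> \<and> t > 0 \<and> dist (x,t) (x0,t0) < r \<longrightarrow>
                  u x t - phi x t \<ge> u x0 t0 - phi x0 t0"
  proof (intro exI conjI allI impI)
    show "T' - t0 > 0" using M(3) by simp
    fix x t assume H: "x \<in> \<Omega> \<and> t > 0 \<and> dist (x,t) (x0,t0) < T' - t0"
    have "dist t t0 \<le> dist (x,t) (x0,t0)" using dist_snd_le[of "(x,t)" "(x0,t0)"] by simp
    then have "\<bar>t - t0\<bar> < T' - t0" using H by (simp add: dist_real_def)
    then have "t < T'" by linarith
    then show "u x t - phi x t \<ge> u x0 t0 - phi x0 t0"
      using M(5)[of x t] H unfolding phi_def by simp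
  qed
  have "pht x0 t0 - eig_j j (wxx x0 t0) \<ge> 0"
    using super unfolding visc_supersol_def
    apply -
    apply (drule spec[of _ x0], drule spec[of _ t0], drule spec[of _ U], drule spec[of _ phi],
        drule spec[of _ wx], drule spec[of _ wxx], drule spec[of _ pht])
    using M(1,2) Uin pC loc by blast
  moreover have "\<eta> / (T' - t0)^2 > 0" using M(3,4) by simp
  ultimately show False using subb[of x0 t0] unfolding pht_def by simp
qed


theorem theorem1p3:
  fixes \<Omega> :: "(real^'n) set" and j :: nat
  assumes "open \<Omega>" and "bounded \<Omega>" and "connected \<Omega>" and "\<Omega> \<noteq> {}"
    and "CARD('n) \<ge> 2"
    and "1 \<le> j" and "j \<le> CARD('n)"
  shows "\<exists>T>0. \<forall>(p :: real^'n \<Rightarrow> real) (u0 :: real^'n \<Rightarrow> real) (u :: real^'n \<Rightarrow> real \<Rightarrow> real).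
           affine_fun p \<and>
           continuous_on (closure \<Omega>) u0 \<and> (\<forall>x \<in> frontier \<Omega>. u0 x = p x) \<and>
           continuous_on (closure \<Omega> \<times> {0..}) (\<lambda>(x,t). u x t) \<and>
           visc_sol j \<Omega> u \<and>
           (\<forall>x \<in> frontier \<Omega>. \<forall>t>0. u x t = p x) \<and>
           (\<forall>x \<in> closure \<Omega>. u x 0 = u0 x)
           \<longrightarrow> (j = 1 \<longrightarrow> (\<forall>x \<in> \<Omega>. \<forall>t>T. u x t \<le> p x)) \<and>
               (j = CARD('n) \<longrightarrow> (\<forall>x \<in> \<Omega>. \<forall>t>T. u x t \<ge> p x)) \<and>
               (1 < j \<and> j < CARD('n) \<longrightarrow> (\<forall>x \<in> \<Omega>. \<forall>t>T. u x t = p x))"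
proof -
  have bc: "bounded (closure \<Omega>)" using assms(2) by (rule bounded_closure)
  obtain R xc where R: "closure \<Omega> \<subseteq> cball xc R" "0 \<le> R"
    using bc bounded_subset_cball by blast
  define R1 where "R1 = R^2 + 1"
  define T where "T = R1 / 2"
  have Tpos: "T > 0" unfolding T_def R1_def by (simp add: add_nonneg_pos)
  have rho: "(x - xc) \<bullet> (x - xc) \<le> R^2" if "x \<in> closure \<Omega>" for x
  proof -
    have "norm (x - xc) \<le> R" using R(1) that by (auto simp: dist_norm norm_minus_commute)
    then have "norm (x - xc)^2 \<le> R^2" by (intro power_mono) auto
    then show ?thesis by (simp add: power2_norm_eq_inner)
  qed
  have ppbig: "pp 3 (sig R1 xc x 0) \<ge> 1" if "x \<in> closure \<Omega>" for x
  proof -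
    have "sig R1 xc x 0 \<ge> 1" using rho[OF that] unfolding sig_def R1_def by simp
    then have "max 0 (sig R1 xc x 0) \<ge> 1" by simp
    then show ?thesis unfolding pp_def by (rule one_le_power)
  qed
  have ppzero: "pp 3 (sig R1 xc x t) = 0" if "t > T" for x t
  proof -
    have r0: "(x - xc) \<bullet> (x - xc) \<ge> 0" by simp
    have "sig R1 xc x t < 0" using that r0 unfolding sig_def T_def by linarith
    then show ?thesis unfolding pp_def by simp
  qed
  show ?thesis
  proof (rule exI[of _ T], intro conjI allI impI)
    show "T > 0" by (rule Tpos)
    fix p u0 :: "real^'n \<Rightarrow> real" and u :: "real^'n \<Rightarrow> real \<Rightarrow> real"
    assume H: "affine_fun p \<and>
           continuous_on (closure \<Omega>) u0 \<and> (\<forall>x \<in> frontier \<Omega>. u0 x = p x) \<and>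
           continuous_on (closure \<Omega> \<times> {0..}) (\<lambda>(x,t). u x t) \<and>
           visc_sol j \<Omega> u \<and>
           (\<forall>x \<in> frontier \<Omega>. \<forall>t>0. u x t = p x) \<and>
           (\<forall>x \<in> closure \<Omega>. u x 0 = u0 x)"
    obtain a b where ab: "\<And>x. p x = a \<bullet> x + b" using H unfolding affine_fun_def by blast
    have peq: "p = (\<lambda>x. a \<bullet> x + b)" using ab by auto
    have u0c: "continuous_on (closure \<Omega>) u0" using H by blast
    have cu: "continuous_on (closure \<Omega> \<times> {0..}) (\<lambda>(x,t). u x t)" using H by blast
    have sub: "visc_subsol j \<Omega> u" and super: "visc_supersol j \<Omega> u"
      using H unfolding visc_sol_def by blast+
    have ubd: "\<And>x t. x \<in> frontier \<Omega> \<Longrightarrow> t > 0 \<Longrightarrow> u x t = p x" using H by blast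
    have uin: "\<And>x. x \<in> closure \<Omega> \<Longrightarrow> u x 0 = u0 x" using H by blast
    have cp: "continuous_on (closure \<Omega>) p" unfolding peq by (intro continuous_intros)
    have "bounded ((\<lambda>x. u0 x - p x) ` closure \<Omega>)"
      by (intro compact_imp_bounded compact_continuous_image continuous_on_diff u0c cp)
        (simp add: compact_closure assms(2))
    then obtain M0 where M0: "\<forall>y\<in>(\<lambda>x. u0 x - p x) ` closure \<Omega>. \<bar>y\<bar> \<le> M0"
      unfolding bounded_real by blast
    define M where "M = max M0 0"
    have Mnn: "M \<ge> 0" unfolding M_def by simp
    have Mb: "\<bar>u0 x - p x\<bar> \<le> M" if "x \<in> closure \<Omega>" for x
      using M0 that unfolding M_def by fastforce
    have bweq: "bw a b xc M R1 s x t = p x + s * M * pp 3 (sig R1 xc x t)" for s x t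
      by (simp add: bw_def ab)
    have UP: "\<forall>x\<in>\<Omega>. \<forall>t>T. u x t \<le> p x" if jN: "j \<le> CARD('n) - 1"
    proof (intro ballI allI impI)
      fix x t assume x: "x \<in> \<Omega>" and t: "t > T"
      have "u x t \<le> bw a b xc M R1 1 x t"
      proof (rule comp_upper[OF assms(1,2) cu sub bw_C21])
        show "eig_j j (bwxx xc M R1 1 y s) \<le> bwt xc M R1 1 y s" for y s
          by (rule bw_upper[OF assms(6) jN])
        show "u y s \<le> bw a b xc M R1 1 y s" if "y \<in> frontier \<Omega>" "s > 0" for y s
          using ubd[OF that] Mnn pp_nonneg[of 3 "sig R1 xc y s"] unfolding bweq by simp
        show "u y 0 \<le> bw a b xc M R1 1 y 0" if "y \<in> closure \<Omega>" for y
        proof -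
          have "M * 1 \<le> M * pp 3 (sig R1 xc y 0)" using ppbig[OF that] Mnn by (intro mult_left_mono)
          then show ?thesis using uin[OF that] Mb[OF that] unfolding bweq by simp
        qed
        show "x \<in> closure \<Omega>" using x closure_subset by blast
        show "t \<ge> 0" using t Tpos by simp
      qed
      then show "u x t \<le> p x" using ppzero[OF t, of x] unfolding bweq by simp
    qed
    have LO: "\<forall>x\<in>\<Omega>. \<forall>t>T. u x t \<ge> p x" if j2: "2 \<le> j"
    proof (intro ballI allI impI)
      fix x t assume x: "x \<in> \<Omega>" and t: "t > T"
      have "bw a b xc M R1 (-1) x t \<le> u x t"
      proof (rule comp_lower[OF assms(1,2) cu super bw_C21])
        show "eig_j j (bwxx xc M R1 (-1) y s) \<ge> bwt xc M R1 (-1) y s" for y s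
          by (rule bw_lower[OF j2 assms(7)])
        show "bw a b xc M R1 (-1) y s \<le> u y s" if "y \<in> frontier \<Omega>" "s > 0" for y s
          using ubd[OF that] Mnn pp_nonneg[of 3 "sig R1 xc y s"] unfolding bweq by simp
        show "bw a b xc M R1 (-1) y 0 \<le> u y 0" if "y \<in> closure \<Omega>" for y
        proof -
          have "M * 1 \<le> M * pp 3 (sig R1 xc y 0)" using ppbig[OF that] Mnn by (intro mult_left_mono)
          then show ?thesis using uin[OF that] Mb[OF that] unfolding bweq by simp
        qed
        show "x \<in> closure \<Omega>" using x closure_subset by blast
        show "t \<ge> 0" using t Tpos by simp
      qed
      then show "u x t \<ge> p x" using ppzero[OF t, of x] unfolding bweq by simp
    qed
    show "\<forall>x \<in> \<Omega>. \<forall>t>T. u x t \<le> p x" if "j = 1"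
      using UP assms(5) that by auto
    show "\<forall>x \<in> \<Omega>. \<forall>t>T. u x t \<ge> p x" if "j = CARD('n)"
      using LO assms(5) that by auto
    show "\<forall>x \<in> \<Omega>. \<forall>t>T. u x t = p x" if jj: "1 < j \<and> j < CARD('n)"
    proof -
      have "j \<le> CARD('n) - 1" "2 \<le> j" using jj by auto
      then show ?thesis using UP LO by (meson order_antisym)
    qed
  qed
qed

end
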